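(* Let $j\in\mathbb N_0$ and let $s_0,\dots,s_{2j+2}$ be Hermitian $q\times q$ matrices such that $(s_{l+k})_{l,k=0}^{j}$ and $(s_{l+k+1})_{l,k=0}^{j}$ are positive definite. Take $a=0$. Then for all sufficiently large $b>0$ the matrices $K_{1,j}$ and $H_{2,j}$ (formed with $a=0$ and this $b$) are positive definite, so that $\mathbf m_j(0,b)$ and $\mathbf l_j(0,b)$ are defined, and $$\mathbf M_j(0)=\lim_{b\to+\infty} b\,\mathbf m_j(0,b),\qquad \mathbf L_j(0)=\lim_{b\to+\infty} b^{-1}\,\mathbf l_j(0,b).$$
   Context: All matrices are complex, $q\in\mathbb N$, $I_q$, $0_q$ are the $q\times q$ identity and zero matrices. For real $a<b$ set $\widehat s_i:=-ab\,s_i+(a+b)s_{i+1}-s_{i+2}$, $H_{1,i}:=(s_{l+k})_{l,k=0}^i$, $H_{2,i}:=(\widehat s_{l+k})_{l,k=0}^{i}$, $K_{1,i}:=(bs_{l+k}-s_{l+k+1})_{l,k=0}^{i}$, $K_{2,i}:=(-as_{l+k}+s_{l+k+1})_{l,k=0}^i$. Let $T_0:=0_q$ and, for $i\ge1$, let $T_i$ be the $(i+1)\times(i+1)$ block matrix with $I_q$ in block positions $(l+1,l)$ and $0_q$ elsewhere; $R_i(z):=(I-zT_i)^{-1}$; $v_i:=\mathrm{col}(I_q,0_q,\dots,0_q)\in\mathbb C^{(i+1)q\times q}$. Let $u_{2,0}:=-(a+b)s_0+s_1$, $u_{2,i}:=\mathrm{col}(u_{2,0},-\widehat s_0,\dots,-\widehat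 s_{i-1})$, $\widetilde u_{2,i}:=\mathrm{col}(-s_0,as_0-s_1,\dots,as_{i-1}-s_i)$. New DSM parameters (depending on $a,b$): $\lambda_i:=(u_{2,i}+av_is_0)^*R_i(a)^*H_{2,i}^{-1}R_i(a)(u_{2,i}+av_is_0)$, $\mu_i:=v_i^*R_i(a)^*K_{1,i}^{-1}R_i(a)v_i$; $\mathbf l_0(a,b):=\lambda_0$, $\mathbf l_i(a,b):=\lambda_i-\lambda_{i-1}$ ($i\ge1$); $\mathbf m_0(a,b):=\mu_0$, $\mathbf m_i(a,b):=\mu_i-\mu_{i-1}$ ($i\ge1$). Earlier DSM parameters (depending only on $a$): $\mathbf M_0(a):=s_0^{-1}$, $\mathbf M_i(a):=v_i^*R_i(a)^*H_{1,i}^{-1}R_i(a)v_i-v_{i-1}^*R_{i-1}(a)^*H_{1,i-1}^{-1}R_{i-1}(a)v_{i-1}$ ($i\ge1$); $\mathbf L_0(a):=\widetilde u_{2,0}^*K_{2,0}^{-1}\widetilde u_{2,0}$, $\mathbf L_i(a):=\widetilde u_{2,i}^*R_i(a)^*K_{2,i}^{-1}R_i(a)\widetilde u_{2,i}-\widetilde u_{2,i-1}^*R_{i-1}(a)^*K_{2,i-1}^{-1}R_{i-1}(a)\widetilde u_{2,i-1}$ ($i\ge1$). At $a=0$, $\mathbf M_j(0)$ and $\mathbf L_j(0)$ are the Dyukarev–Stieltjes parameters of the truncated Stieltjes matrix moment problem. *)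

theory Defs
  imports "Jordan_Normal_Form.Gauss_Jordan_Elimination"
begin

definition cadj :: "complex mat \<Rightarrow> complex mat" where
  "cadj A = mat (dim_col A) (dim_row A) (\<lambda>(i,j). cnj (A $$ (j,i)))"

definition hermitian_mat :: "nat \<Rightarrow> complex mat \<Rightarrow> bool" where
  "hermitian_mat n A \<longleftrightarrow> A \<in> carrier_mat n n \<and> cadj A = A"

definition pos_def_mat :: "nat \<Rightarrow> complex mat \<Rightarrow> bool" where
  "pos_def_mat n A \<longleftrightarrow> hermitian_mat n A \<and>
     (\<forall>v \<in> carrier_vec n. v \<noteq> 0\<^sub>v n \<longrightarrow>
        0 < Re (\<Sum>i<n. cnj (v $ i) * (A *\<^sub>v v) $ i))"

definition minv :: "complex mat \<Rightarrow> complex mat" where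
  "minv A = (case mat_inverse A of Some B \<Rightarrow> B | None \<Rightarrow> 0\<^sub>m (dim_col A) (dim_row A))"

text \<open>Block Hankel matrix (t (l+k))_{l,k=0}^i of size (i+1)q.\<close>
definition hankel :: "nat \<Rightarrow> nat \<Rightarrow> (nat \<Rightarrow> complex mat) \<Rightarrow> complex mat" where
  "hankel q i t = mat ((i+1)*q) ((i+1)*q)
     (\<lambda>(r,c). t (r div q + c div q) $$ (r mod q, c mod q))"

text \<open>Block column col(f 0, ..., f i) of size (i+1)q x q.\<close>
definition blockcol :: "nat \<Rightarrow> nat \<Rightarrow> (nat \<Rightarrow> complex mat) \<Rightarrow> complex mat" where
  "blockcol q i f = mat ((i+1)*q) q (\<lambda>(r,c). f (r div q) $$ (r mod q, c))"

text \<open>T_i: I_q in block positions (l+1,l), zero elsewhere (T_0 = 0_q).\<close>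
definition Tmat :: "nat \<Rightarrow> nat \<Rightarrow> complex mat" where
  "Tmat q i = mat ((i+1)*q) ((i+1)*q)
     (\<lambda>(r,c). if r div q = c div q + 1 \<and> r mod q = c mod q then 1 else 0)"

definition Rmat :: "nat \<Rightarrow> nat \<Rightarrow> complex \<Rightarrow> complex mat" where
  "Rmat q i z = minv (1\<^sub>m ((i+1)*q) - z \<cdot>\<^sub>m Tmat q i)"

definition vvec :: "nat \<Rightarrow> nat \<Rightarrow> complex mat" where
  "vvec q i = blockcol q i (\<lambda>k. if k = 0 then 1\<^sub>m q else 0\<^sub>m q q)"

definition shat :: "real \<Rightarrow> real \<Rightarrow> (nat \<Rightarrow> complex mat) \<Rightarrow> nat \<Rightarrow> complex mat" where
  "shat a b s i = (- complex_of_real (a*b)) \<cdot>\<^sub>m s i + complex_of_real (a+b) \<cdot>\<^sub>m s (i+1) - s (i+2)"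

definition H1 :: "nat \<Rightarrow> (nat \<Rightarrow> complex mat) \<Rightarrow> nat \<Rightarrow> complex mat" where
  "H1 q s i = hankel q i s"

definition H2 :: "nat \<Rightarrow> real \<Rightarrow> real \<Rightarrow> (nat \<Rightarrow> complex mat) \<Rightarrow> nat \<Rightarrow> complex mat" where
  "H2 q a b s i = hankel q i (shat a b s)"

definition K1 :: "nat \<Rightarrow> real \<Rightarrow> (nat \<Rightarrow> complex mat) \<Rightarrow> nat \<Rightarrow> complex mat" where
  "K1 q b s i = hankel q i (\<lambda>n. complex_of_real b \<cdot>\<^sub>m s n - s (n+1))"

definition K2 :: "nat \<Rightarrow> real \<Rightarrow> (nat \<Rightarrow> complex mat) \<Rightarrow> nat \<Rightarrow> complex mat" where
  "K2 q a s i = hankel q i (\<lambda>n. (- complex_of_real a) \<cdot>\<^sub>m s n + s (n+1))"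

definition u20 :: "real \<Rightarrow> real \<Rightarrow> (nat \<Rightarrow> complex mat) \<Rightarrow> complex mat" where
  "u20 a b s = (- complex_of_real (a+b)) \<cdot>\<^sub>m s 0 + s 1"

definition u2 :: "nat \<Rightarrow> real \<Rightarrow> real \<Rightarrow> (nat \<Rightarrow> complex mat) \<Rightarrow> nat \<Rightarrow> complex mat" where
  "u2 q a b s i = blockcol q i (\<lambda>k. if k = 0 then u20 a b s else - shat a b s (k - 1))"

definition u2t :: "nat \<Rightarrow> real \<Rightarrow> (nat \<Rightarrow> complex mat) \<Rightarrow> nat \<Rightarrow> complex mat" where
  "u2t q a s i = blockcol q i
     (\<lambda>k. if k = 0 then - s 0 else complex_of_real a \<cdot>\<^sub>m s (k - 1) - s k)"

definition lam :: "nat \<Rightarrow> real \<Rightarrow> real \<Rightarrow> (nat \<Rightarrow> complex mat) \<Rightarrow> nat \<Rightarrow> complex mat" where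
  "lam q a b s i = (let w = Rmat q i (complex_of_real a) *
        (u2 q a b s i + complex_of_real a \<cdot>\<^sub>m (vvec q i * s 0))
     in cadj w * minv (H2 q a b s i) * w)"

definition mu :: "nat \<Rightarrow> real \<Rightarrow> real \<Rightarrow> (nat \<Rightarrow> complex mat) \<Rightarrow> nat \<Rightarrow> complex mat" where
  "mu q a b s i = (let w = Rmat q i (complex_of_real a) * vvec q i
     in cadj w * minv (K1 q b s i) * w)"

definition l_par :: "nat \<Rightarrow> real \<Rightarrow> real \<Rightarrow> (nat \<Rightarrow> complex mat) \<Rightarrow> nat \<Rightarrow> complex mat" where
  "l_par q a b s i = (if i = 0 then lam q a b s 0 else lam q a b s i - lam q a b s (i - 1))"

definition m_par :: "nat \<Rightarrow> real \<Rightarrow> real \<Rightarrow> (nat \<Rightarrow> complex mat) \<Rightarrow> nat \<Rightarrow> complex mat" where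
  "m_par q a b s i = (if i = 0 then mu q a b s 0 else mu q a b s i - mu q a b s (i - 1))"

definition Mcum :: "nat \<Rightarrow> real \<Rightarrow> (nat \<Rightarrow> complex mat) \<Rightarrow> nat \<Rightarrow> complex mat" where
  "Mcum q a s i = (let w = Rmat q i (complex_of_real a) * vvec q i
     in cadj w * minv (H1 q s i) * w)"

definition Lcum :: "nat \<Rightarrow> real \<Rightarrow> (nat \<Rightarrow> complex mat) \<Rightarrow> nat \<Rightarrow> complex mat" where
  "Lcum q a s i = (let w = Rmat q i (complex_of_real a) * u2t q a s i
     in cadj w * minv (K2 q a s i) * w)"

definition M_par :: "nat \<Rightarrow> real \<Rightarrow> (nat \<Rightarrow> complex mat) \<Rightarrow> nat \<Rightarrow> complex mat" where
  "M_par q a s i = (if i = 0 then minv (s 0) else Mcum q a s i - Mcum q a s (i - 1))"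

definition L_par :: "nat \<Rightarrow> real \<Rightarrow> (nat \<Rightarrow> complex mat) \<Rightarrow> nat \<Rightarrow> complex mat" where
  "L_par q a s i = (if i = 0 then cadj (u2t q a s 0) * minv (K2 q a s 0) * u2t q a s 0
                    else Lcum q a s i - Lcum q a s (i - 1))"

definition mat_tendsto_at_top :: "nat \<Rightarrow> (real \<Rightarrow> complex mat) \<Rightarrow> complex mat \<Rightarrow> bool" where
  "mat_tendsto_at_top q f L \<longleftrightarrow>
     (\<forall>i<q. \<forall>k<q. ((\<lambda>b. f b $$ (i,k)) \<longlongrightarrow> L $$ (i,k)) at_top)"

end

theory Submission imports Defs "Jordan_Normal_Form.Determinant" begin

definition mt :: "'b filter \<Rightarrow> nat \<Rightarrow> nat \<Rightarrow> ('b \<Rightarrow> complex mat) \<Rightarrow> complex mat \<Rightarrow> bool"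
  where "mt F nr nc f A \<longleftrightarrow> (\<forall>i<nr. \<forall>k<nc. ((\<lambda>b. f b $$ (i,k)) \<longlongrightarrow> A $$ (i,k)) F)"

lemma mult_index_sum:
  assumes "A \<in> carrier_mat nr m" "B \<in> carrier_mat m nc" "i < nr" "k < nc"
  shows "(A * B) $$ (i,k) = (\<Sum>l<m. A $$ (i,l) * B $$ (l,k))"
  using assms by (auto simp: scalar_prod_def atLeast0LessThan intro!: sum.cong)

lemma mt_mult:
  assumes "\<And>b. f b \<in> carrier_mat nr m" "\<And>b. g b \<in> carrier_mat m nc"
    "A \<in> carrier_mat nr m" "B \<in> carrier_mat m nc"
    "mt F nr m f A" "mt F m nc g B"
  shows "mt F nr nc (\<lambda>b. f b * g b) (A * B)"
  unfolding mt_def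
proof (intro allI impI)
  fix i k assume ik: "i < nr" "k < nc"
  have "((\<lambda>b. \<Sum>l<m. f b $$ (i,l) * g b $$ (l,k)) \<longlongrightarrow> (\<Sum>l<m. A $$ (i,l) * B $$ (l,k))) F"
    using assms(5,6) ik unfolding mt_def by (intro tendsto_sum tendsto_mult) auto
  then show "((\<lambda>b. (f b * g b) $$ (i,k)) \<longlongrightarrow> (A * B) $$ (i,k)) F"
    using mult_index_sum[OF assms(1,2) ik] mult_index_sum[OF assms(3,4) ik] by simp
qed

lemma mt_add:
  assumes "\<And>b. f b \<in> carrier_mat nr nc" "\<And>b. g b \<in> carrier_mat nr nc"
    "A \<in> carrier_mat nr nc" "B \<in> carrier_mat nr nc"
    "mt F nr nc f A" "mt F nr nc g B"
  shows "mt F nr nc (\<lambda>b. f b + g b) (A + B)"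
  unfolding mt_def
proof (intro allI impI)
  fix i k assume ik: "i < nr" "k < nc"
  have "((\<lambda>b. f b $$ (i,k) + g b $$ (i,k)) \<longlongrightarrow> A $$ (i,k) + B $$ (i,k)) F"
    using assms(5,6) ik unfolding mt_def by (intro tendsto_add) auto
  moreover have "\<And>b. (f b + g b) $$ (i,k) = f b $$ (i,k) + g b $$ (i,k)"
    using assms(1,2) ik by (metis carrier_matD index_add_mat(1))
  ultimately show "((\<lambda>b. (f b + g b) $$ (i,k)) \<longlongrightarrow> (A + B) $$ (i,k)) F"
    using assms(3,4) ik by simp
qed

lemma mt_minus:
  assumes "\<And>b. f b \<in> carrier_mat nr nc" "\<And>b. g b \<in> carrier_mat nr nc"
    "A \<in> carrier_mat nr nc" "B \<in> carrier_mat nr nc"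
    "mt F nr nc f A" "mt F nr nc g B"
  shows "mt F nr nc (\<lambda>b. f b - g b) (A - B)"
  unfolding mt_def
proof (intro allI impI)
  fix i k assume ik: "i < nr" "k < nc"
  have "((\<lambda>b. f b $$ (i,k) - g b $$ (i,k)) \<longlongrightarrow> A $$ (i,k) - B $$ (i,k)) F"
    using assms(5,6) ik unfolding mt_def by (intro tendsto_diff) auto
  moreover have "\<And>b. (f b - g b) $$ (i,k) = f b $$ (i,k) - g b $$ (i,k)"
    using assms(1,2) ik by (metis carrier_matD index_minus_mat(1))
  ultimately show "((\<lambda>b. (f b - g b) $$ (i,k)) \<longlongrightarrow> (A - B) $$ (i,k)) F"
    using assms(3,4) ik by simp
qed

lemma mt_smult:
  assumes "\<And>b. f b \<in> carrier_mat nr nc" "A \<in> carrier_mat nr nc"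
    "mt F nr nc f A" "(c \<longlongrightarrow> c0) F"
  shows "mt F nr nc (\<lambda>b. c b \<cdot>\<^sub>m f b) (c0 \<cdot>\<^sub>m A)"
  unfolding mt_def
proof (intro allI impI)
  fix i k assume ik: "i < nr" "k < nc"
  have "((\<lambda>b. c b * f b $$ (i,k)) \<longlongrightarrow> c0 * A $$ (i,k)) F"
    using assms(3,4) ik unfolding mt_def by (intro tendsto_mult) auto
  moreover have "\<And>b. (c b \<cdot>\<^sub>m f b) $$ (i,k) = c b * f b $$ (i,k)"
    using assms(1) ik by (metis carrier_matD index_smult_mat(1))
  ultimately show "((\<lambda>b. (c b \<cdot>\<^sub>m f b) $$ (i,k)) \<longlongrightarrow> (c0 \<cdot>\<^sub>m A) $$ (i,k)) F"
    using assms(2) ik by simp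
qed

lemma mt_const: "A \<in> carrier_mat nr nc \<Longrightarrow> mt F nr nc (\<lambda>b. A) A"
  unfolding mt_def by auto

lemma cadj_carrier[simp]: "A \<in> carrier_mat nr nc \<Longrightarrow> cadj A \<in> carrier_mat nc nr"
  unfolding cadj_def by auto

lemma cadj_index: "A \<in> carrier_mat nr nc \<Longrightarrow> i < nc \<Longrightarrow> k < nr \<Longrightarrow> cadj A $$ (i,k) = cnj (A $$ (k,i))"
  unfolding cadj_def by auto

lemma mt_cadj:
  assumes "\<And>b. f b \<in> carrier_mat nr nc" "A \<in> carrier_mat nr nc" "mt F nr nc f A"
  shows "mt F nc nr (\<lambda>b. cadj (f b)) (cadj A)"
  unfolding mt_def
proof (intro allI impI)
  fix i k assume ik: "i < nc" "k < nr"
  have "((\<lambda>b. cnj (f b $$ (k,i))) \<longlongrightarrow> cnj (A $$ (k,i))) F"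
    using assms(3) ik unfolding mt_def by (intro tendsto_cnj) auto
  then show "((\<lambda>b. cadj (f b) $$ (i,k)) \<longlongrightarrow> cadj A $$ (i,k)) F"
    using cadj_index[OF assms(1) ik] cadj_index[OF assms(2) ik] by simp
qed

lemma mt_cong:
  assumes "eventually (\<lambda>b. f b = g b) F" "mt F nr nc g A"
  shows "mt F nr nc f A"
  unfolding mt_def
proof (intro allI impI)
  fix i k assume ik: "i < nr" "k < nc"
  have "eventually (\<lambda>b. g b $$ (i,k) = f b $$ (i,k)) F"
    using assms(1) by (auto elim: eventually_mono)
  then show "((\<lambda>b. f b $$ (i,k)) \<longlongrightarrow> A $$ (i,k)) F"
    using assms(2) ik unfolding mt_def by (auto intro: Lim_transform_eventually)
qed

lemma det_tendsto:
  assumes "\<And>b. f b \<in> carrier_mat n n" "A \<in> carrier_mat n n" "mt F n n f A"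
  shows "((\<lambda>b. det (f b)) \<longlongrightarrow> det A) F"
proof -
  have "((\<lambda>b. \<Sum> p \<in> {p. p permutes {0 ..< n}}. signof p * (\<Prod> i = 0 ..< n. f b $$ (i, p i)))
      \<longlongrightarrow> (\<Sum> p \<in> {p. p permutes {0 ..< n}}. signof p * (\<Prod> i = 0 ..< n. A $$ (i, p i)))) F"
    using assms(3) unfolding mt_def
    by (intro tendsto_sum tendsto_mult tendsto_const tendsto_prod)
       (auto simp: permutes_in_image)
  then show ?thesis using det_def'[OF assms(1)] det_def'[OF assms(2)] by simp
qed

lemma minv_carrier: "A \<in> carrier_mat n n \<Longrightarrow> minv A \<in> carrier_mat n n"
  unfolding minv_def
  by (cases "mat_inverse A") (auto dest: mat_inverse(2))

lemma minv_props:
  assumes A: "A \<in> carrier_mat n n" and d: "det A \<noteq> 0"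
  shows "A * minv A = 1\<^sub>m n \<and> minv A * A = 1\<^sub>m n"
proof -
  have U: "A \<in> Units (ring_mat TYPE(complex) n (undefined::unit))"
    by (rule det_non_zero_imp_unit[OF A d])
  obtain B where "mat_inverse A = Some B"
  proof (cases "mat_inverse A")
    case None
    have "A \<notin> Units (ring_mat TYPE(complex) n (undefined::unit))" by (rule mat_inverse(1)[OF A None])
    with U show ?thesis by blast
  qed auto
  then show ?thesis using mat_inverse(2)[OF A] unfolding minv_def by auto
qed

lemma minv_unique:
  assumes A: "A \<in> carrier_mat n n" and B: "B \<in> carrier_mat n n" and AB: "A * B = 1\<^sub>m n"
  shows "minv A = B"
proof -
  have "det A * det B = 1" using det_mult[OF A B] AB by simp
  then have d: "det A \<noteq> 0" by auto
  have M: "minv A \<in> carrier_mat n n" by (rule minv_carrier[OF A])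
  have "minv A = minv A * (A * B)" using AB M by simp
  also have "\<dots> = (minv A * A) * B" using A B M by simp
  also have "\<dots> = B" using minv_props[OF A d] B by simp
  finally show ?thesis .
qed

lemma minv_adj:
  assumes A: "A \<in> carrier_mat n n" and d: "det A \<noteq> 0"
  shows "minv A = (1 / det A) \<cdot>\<^sub>m adj_mat A"
proof (rule minv_unique[OF A])
  show "(1 / det A) \<cdot>\<^sub>m adj_mat A \<in> carrier_mat n n" using adj_mat(1)[OF A] by simp
  have "A * ((1 / det A) \<cdot>\<^sub>m adj_mat A) = (1 / det A) \<cdot>\<^sub>m (A * adj_mat A)"
    using mult_smult_distrib[OF A adj_mat(1)[OF A]] .
  also have "\<dots> = 1\<^sub>m n" unfolding adj_mat(2)[OF A] using d
    by (auto intro!: eq_matI)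
  finally show "A * ((1 / det A) \<cdot>\<^sub>m adj_mat A) = 1\<^sub>m n" .
qed

lemma minv_smult:
  assumes A: "A \<in> carrier_mat n n" and d: "det A \<noteq> 0" and c: "c \<noteq> 0"
  shows "minv (c \<cdot>\<^sub>m A) = (1 / c) \<cdot>\<^sub>m minv A"
proof (rule minv_unique)
  show "c \<cdot>\<^sub>m A \<in> carrier_mat n n" using A by simp
  show "(1 / c) \<cdot>\<^sub>m minv A \<in> carrier_mat n n" using minv_carrier[OF A] by simp
  have M: "minv A \<in> carrier_mat n n" by (rule minv_carrier[OF A])
  have "(c \<cdot>\<^sub>m A) * ((1 / c) \<cdot>\<^sub>m minv A) = c \<cdot>\<^sub>m (A * ((1 / c) \<cdot>\<^sub>m minv A))"
    by (rule mult_smult_assoc_mat[OF A, of _ n]) (use M in simp)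
  also have "\<dots> = c \<cdot>\<^sub>m ((1/c) \<cdot>\<^sub>m (A * minv A))"
    using mult_smult_distrib[OF A M] by simp
  finally have "(c \<cdot>\<^sub>m A) * ((1 / c) \<cdot>\<^sub>m minv A) = c \<cdot>\<^sub>m ((1/c) \<cdot>\<^sub>m (A * minv A))" .
  also have "\<dots> = 1\<^sub>m n" using minv_props[OF A d] c by (auto intro!: eq_matI)
  finally show "(c \<cdot>\<^sub>m A) * ((1 / c) \<cdot>\<^sub>m minv A) = 1\<^sub>m n" .
qed

lemma mt_delete:
  assumes "\<And>b. f b \<in> carrier_mat n n" "A \<in> carrier_mat n n" "mt F n n f A" "i < n" "k < n"
  shows "mt F (n-1) (n-1) (\<lambda>b. mat_delete (f b) i k) (mat_delete A i k)"
  unfolding mt_def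
proof (intro allI impI)
  fix x y assume xy: "x < n-1" "y < n-1"
  have [simp]: "dim_row (f b) = n" "dim_col (f b) = n" for b using assms(1)[of b] by auto
  show "((\<lambda>b. mat_delete (f b) i k $$ (x,y)) \<longlongrightarrow> mat_delete A i k $$ (x,y)) F"
    using assms(2,3) xy unfolding mat_delete_def mt_def by (auto split: if_splits)
qed

lemma mt_adj:
  assumes f: "\<And>b. f b \<in> carrier_mat n n" and A: "A \<in> carrier_mat n n" and m: "mt F n n f A"
  shows "mt F n n (\<lambda>b. adj_mat (f b)) (adj_mat A)"
  unfolding mt_def
proof (intro allI impI)
  fix i k assume ik: "i < n" "k < n"
  have [simp]: "dim_row (f b) = n" "dim_col (f b) = n" for b using f[of b] by auto
  have D: "\<And>b. mat_delete (f b) k i \<in> carrier_mat (n-1) (n-1)"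
    using mat_delete_carrier[OF f] by blast
  have "((\<lambda>b. (-1)^(k+i) * det (mat_delete (f b) k i)) \<longlongrightarrow> (-1)^(k+i) * det (mat_delete A k i)) F"
    by (intro tendsto_mult tendsto_const det_tendsto[OF D] mat_delete_carrier[OF A] mt_delete[OF f A m]) (use ik in auto)
  then show "((\<lambda>b. adj_mat (f b) $$ (i,k)) \<longlongrightarrow> adj_mat A $$ (i,k)) F"
    using f A ik unfolding adj_mat_def cofactor_def by simp
qed

lemma mt_minv:
  assumes f: "\<And>b. f b \<in> carrier_mat n n" and A: "A \<in> carrier_mat n n" and m: "mt F n n f A"
    and d: "det A \<noteq> 0"
  shows "mt F n n (\<lambda>b. minv (f b)) (minv A)"
proof -
  have dt: "((\<lambda>b. det (f b)) \<longlongrightarrow> det A) F" by (rule det_tendsto[OF f A m])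
  have ev: "eventually (\<lambda>b. det (f b) \<noteq> 0) F" by (rule tendsto_imp_eventually_ne[OF dt d])
  have "mt F n n (\<lambda>b. (1 / det (f b)) \<cdot>\<^sub>m adj_mat (f b)) ((1 / det A) \<cdot>\<^sub>m adj_mat A)"
    by (rule mt_smult[OF adj_mat(1)[OF f] adj_mat(1)[OF A] mt_adj[OF f A m]])
       (intro tendsto_divide tendsto_const dt d)
  then show ?thesis unfolding minv_adj[OF A d]
    by (rule mt_cong[rotated]) (use ev in \<open>auto elim!: eventually_mono simp: minv_adj[OF f]\<close>)
qed

definition qf :: "nat \<Rightarrow> complex mat \<Rightarrow> (nat \<Rightarrow> complex) \<Rightarrow> (nat \<Rightarrow> complex) \<Rightarrow> complex"
  where "qf n P x y = (\<Sum>i<n. \<Sum>l<n. cnj (x i) * P $$ (i,l) * y l)"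

lemma qf_diff_left: "qf n P (\<lambda>i. x i - y i) z = qf n P x z - qf n P y z"
  unfolding qf_def by (simp add: sum_subtractf algebra_simps)

lemma qf_diff_right: "qf n P z (\<lambda>i. x i - y i) = qf n P z x - qf n P z y"
  unfolding qf_def by (simp add: sum_subtractf algebra_simps)

lemma qf_smult_left: "qf n P (\<lambda>i. c * x i) z = cnj c * qf n P x z"
  unfolding qf_def by (simp add: sum_distrib_left algebra_simps)

lemma qf_smult_right: "qf n P z (\<lambda>i. c * x i) = c * qf n P z x"
  unfolding qf_def by (simp add: sum_distrib_left algebra_simps)

lemma qf_lin:
  assumes "\<And>i l. i < n \<Longrightarrow> l < n \<Longrightarrow> M $$ (i,l) = b * P $$ (i,l) - Q $$ (i,l)"
  shows "qf n M x y = b * qf n P x y - qf n Q x y"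
proof -
  have "qf n M x y = (\<Sum>i<n. \<Sum>l<n. b * (cnj (x i) * P $$ (i,l) * y l) - cnj (x i) * Q $$ (i,l) * y l)"
    unfolding qf_def by (intro sum.cong refl) (simp add: assms algebra_simps)
  then show ?thesis by (simp add: qf_def sum_subtractf sum_distrib_left)
qed

lemma qf_herm:
  assumes "hermitian_mat n P"
  shows "qf n P x y = cnj (qf n P y x)"
proof -
  have P: "P \<in> carrier_mat n n" and C: "cadj P = P" using assms unfolding hermitian_mat_def by auto
  have e: "P $$ (i,l) = cnj (P $$ (l,i))" if "i < n" "l < n" for i l
    using cadj_index[OF P that] C by simp
  have "qf n P x y = (\<Sum>i<n. \<Sum>l<n. cnj (x i) * cnj (P $$ (l,i)) * y l)"
    unfolding qf_def by (intro sum.cong refl) (subst e, auto)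
  also have "\<dots> = (\<Sum>l<n. \<Sum>i<n. cnj (x i) * cnj (P $$ (l,i)) * y l)"
    by (rule sum.swap)
  also have "\<dots> = cnj (qf n P y x)"
    unfolding qf_def cnj_sum by (intro sum.cong refl) (simp add: ac_simps)
  finally show ?thesis .
qed

lemma qf_vec:
  assumes P: "P \<in> carrier_mat n n" and v: "v \<in> carrier_vec n"
  shows "(\<Sum>i<n. cnj (v $ i) * (P *\<^sub>v v) $ i) = qf n P (\<lambda>i. v $ i) (\<lambda>i. v $ i)"
proof -
  have "(P *\<^sub>v v) $ i = (\<Sum>l<n. P $$ (i,l) * v $ l)" if "i < n" for i
    using P v that by (simp add: scalar_prod_def atLeast0LessThan)
  then show ?thesis unfolding qf_def
    by (intro sum.cong refl) (simp add: sum_distrib_left mult.assoc)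
qed

lemma pd_pos:
  assumes "pos_def_mat n P" "i < n" "x i \<noteq> 0"
  shows "0 < Re (qf n P x x)"
proof -
  have P: "P \<in> carrier_mat n n" using assms(1) unfolding pos_def_mat_def hermitian_mat_def by auto
  let ?v = "vec n x"
  have "?v \<noteq> 0\<^sub>v n" using assms(2,3) by (metis index_vec index_zero_vec(1))
  then have "0 < Re (\<Sum>i<n. cnj (?v $ i) * (P *\<^sub>v ?v) $ i)"
    using assms(1) unfolding pos_def_mat_def by auto
  also have "(\<Sum>i<n. cnj (?v $ i) * (P *\<^sub>v ?v) $ i) = qf n P x x"
    unfolding qf_vec[OF P vec_carrier] unfolding qf_def by (intro sum.cong refl) simp
  finally show ?thesis .
qed

lemma pd_nonneg:
  assumes "pos_def_mat n P"
  shows "0 \<le> Re (qf n P x x)"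
proof (cases "\<exists>i<n. x i \<noteq> 0")
  case True then show ?thesis using pd_pos[OF assms] by (meson less_le)
next
  case False then show ?thesis unfolding qf_def by simp
qed

lemma qf_real:
  assumes "hermitian_mat n P" shows "qf n P x x = of_real (Re (qf n P x x))"
  using qf_herm[OF assms, of x x] by (metis Reals_cnj_iff complex_is_Real_iff of_real_Re)

lemma cauchy_schwarz_qf:
  assumes pd: "pos_def_mat n P" and h: "0 < Re (qf n P y y)"
  shows "(cmod (qf n P y x))^2 \<le> Re (qf n P x x) * Re (qf n P y y)"
proof -
  have H: "hermitian_mat n P" using pd unfolding pos_def_mat_def by auto
  define hh where "hh = qf n P y y"
  have hh: "hh = of_real (Re hh)" unfolding hh_def by (rule qf_real[OF H])
  have hh0: "hh \<noteq> 0" using h unfolding hh_def by auto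
  define lam where "lam = qf n P y x / hh"
  define z where "z = (\<lambda>i. x i - lam * y i)"
  have "qf n P y z = qf n P y x - lam * hh"
    unfolding z_def qf_diff_right qf_smult_right hh_def ..
  also have "\<dots> = 0" unfolding lam_def using hh0 by simp
  finally have yz: "qf n P y z = 0" .
  have "qf n P z z = qf n P x z - cnj lam * qf n P y z"
    unfolding z_def qf_diff_left qf_smult_left ..
  also have "\<dots> = qf n P x z" using yz by simp
  also have "\<dots> = qf n P x x - lam * qf n P x y"
    unfolding z_def qf_diff_right qf_smult_right ..
  also have "qf n P x y = cnj (qf n P y x)" by (rule qf_herm[OF H])
  finally have "qf n P z z = qf n P x x - qf n P y x * cnj (qf n P y x) / hh"
    unfolding lam_def by simp
  also have "qf n P y x * cnj (qf n P y x) = of_real ((cmod (qf n P y x))^2)"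
    using complex_norm_square[of "qf n P y x"] by simp
  finally have "Re (qf n P z z) = Re (qf n P x x) - (cmod (qf n P y x))^2 / Re hh"
    by (subst (asm) hh) (simp add: Re_divide_of_real)
  moreover have "0 \<le> Re (qf n P z z)" by (rule pd_nonneg[OF pd])
  ultimately have "(cmod (qf n P y x))^2 / Re hh \<le> Re (qf n P x x)" by simp
  then show ?thesis using h unfolding hh_def by (simp add: divide_le_eq)
qed

lemma pd_det:
  assumes pd: "pos_def_mat n P" shows "det P \<noteq> 0"
proof
  assume "det P = 0"
  have P: "P \<in> carrier_mat n n" using pd unfolding pos_def_mat_def hermitian_mat_def by auto
  obtain v where v: "v \<in> carrier_vec n" "v \<noteq> 0\<^sub>v n" "P *\<^sub>v v = 0\<^sub>v n"
    using det_0_iff_vec_prod_zero[OF P] \<open>det P = 0\<close> by auto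
  have "0 < Re (\<Sum>i<n. cnj (v $ i) * (P *\<^sub>v v) $ i)" using pd v unfolding pos_def_mat_def by auto
  moreover have "(\<Sum>i<n. cnj (v $ i) * (P *\<^sub>v v) $ i) = 0" using v(3) by simp
  ultimately show False by simp
qed

lemma pd_lower:
  assumes pd: "pos_def_mat n P"
  shows "\<exists>c>0. \<forall>x. c * (\<Sum>k<n. (cmod (x k))^2) \<le> Re (qf n P x x)"
proof -
  have H: "hermitian_mat n P" using pd unfolding pos_def_mat_def by auto
  have P: "P \<in> carrier_mat n n" using H unfolding hermitian_mat_def by auto
  define Y where "Y = minv P"
  have Y: "Y \<in> carrier_mat n n" unfolding Y_def by (rule minv_carrier[OF P])
  have PY: "P * Y = 1\<^sub>m n" unfolding Y_def using minv_props[OF P pd_det[OF pd]] by simp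
  define y where "y k = (\<lambda>i. Y $$ (i,k))" for k
  have PYe: "(\<Sum>l<n. P $$ (i,l) * Y $$ (l,k)) = (if i = k then 1 else 0)" if "i < n" "k < n" for i k
    using mult_index_sum[OF P Y that] PY that by simp
  have c1: "qf n P x (y k) = cnj (x k)" if k: "k < n" for x k
  proof -
    have "qf n P x (y k) = (\<Sum>i<n. cnj (x i) * (\<Sum>l<n. P $$ (i,l) * Y $$ (l,k)))"
      unfolding qf_def y_def by (simp add: sum_distrib_left mult.assoc)
    also have "\<dots> = (\<Sum>i<n. if i = k then cnj (x i) else 0)"
      by (intro sum.cong refl) (simp add: PYe k)
    also have "\<dots> = cnj (x k)" using k by simp
    finally show ?thesis .
  qed
  have c2: "qf n P (y k) x = x k" if "k < n" for x k
    using qf_herm[OF H, of "y k" x] c1[OF that] by simp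
  have c3: "0 < Re (qf n P (y k) (y k))" if k: "k < n" for k
  proof -
    have "\<exists>i<n. y k i \<noteq> 0"
    proof (rule ccontr)
      assume "\<not> ?thesis"
      then have "(\<Sum>l<n. P $$ (k,l) * Y $$ (l,k)) = 0" unfolding y_def by simp
      with PYe[OF k k] show False by simp
    qed
    then show ?thesis using pd_pos[OF pd] by blast
  qed
  define D where "D = (\<Sum>k<n. Re (qf n P (y k) (y k)))"
  have D0: "0 \<le> D" unfolding D_def using c3 by (intro sum_nonneg) (simp add: less_imp_le)
  have bound: "(\<Sum>k<n. (cmod (x k))^2) \<le> Re (qf n P x x) * D" for x
  proof -
    have "(cmod (x k))^2 \<le> Re (qf n P x x) * Re (qf n P (y k) (y k))" if "k < n" for k
      using cauchy_schwarz_qf[OF pd c3[OF that], of x] c2[OF that] by simp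
    then have "(\<Sum>k<n. (cmod (x k))^2) \<le> (\<Sum>k<n. Re (qf n P x x) * Re (qf n P (y k) (y k)))"
      by (intro sum_mono) auto
    then show ?thesis unfolding D_def by (simp add: sum_distrib_left)
  qed
  show ?thesis
  proof (intro exI[of _ "1 / (D + 1)"] conjI allI)
    show "0 < 1 / (D + 1)" using D0 by simp
    fix x
    have q0: "0 \<le> Re (qf n P x x)" by (rule pd_nonneg[OF pd])
    have "(\<Sum>k<n. (cmod (x k))^2) \<le> Re (qf n P x x) * (D + 1)"
      using bound[of x] q0 by (simp add: algebra_simps)
    then show "1 / (D + 1) * (\<Sum>k<n. (cmod (x k))^2) \<le> Re (qf n P x x)"
      using D0 by (simp add: field_simps)
  qed
qed

lemma qf_upper:
  shows "\<exists>C. \<forall>x. Re (qf n Q x x) \<le> C * (\<Sum>k<n. (cmod (x k))^2)"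
proof (intro exI allI)
  fix x
  define N where "N = (\<Sum>k<n. (cmod (x k))^2)"
  have xi: "(cmod (x i))^2 \<le> N" if "i < n" for i
    unfolding N_def using that by (intro member_le_sum) auto
  have xil: "cmod (x i) * cmod (x l) \<le> N" if "i < n" "l < n" for i l
  proof -
    have "0 \<le> (cmod (x i) - cmod (x l))^2" by simp
    then have "2 * (cmod (x i) * cmod (x l)) \<le> (cmod (x i))^2 + (cmod (x l))^2"
      by (simp add: power2_eq_square algebra_simps)
    then show ?thesis using xi[OF that(1)] xi[OF that(2)] by simp
  qed
  have "Re (qf n Q x x) \<le> cmod (qf n Q x x)" by (rule complex_Re_le_cmod)
  also have "\<dots> \<le> (\<Sum>i<n. \<Sum>l<n. cmod (cnj (x i) * Q $$ (i,l) * x l))"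
    unfolding qf_def by (rule order.trans[OF norm_sum sum_mono]) (rule norm_sum)
  also have "\<dots> \<le> (\<Sum>i<n. \<Sum>l<n. cmod (Q $$ (i,l)) * N)"
  proof (intro sum_mono)
    fix i l assume "i \<in> {..<n}" "l \<in> {..<n}"
    then have "cmod (Q $$ (i,l)) * (cmod (x i) * cmod (x l)) \<le> cmod (Q $$ (i,l)) * N"
      using xil by (intro mult_left_mono) auto
    then show "cmod (cnj (x i) * Q $$ (i,l) * x l) \<le> cmod (Q $$ (i,l)) * N"
      by (simp add: norm_mult algebra_simps)
  qed
  also have "\<dots> = (\<Sum>i<n. \<Sum>l<n. cmod (Q $$ (i,l))) * N"
    by (simp add: sum_distrib_right)
  finally show "Re (qf n Q x x) \<le> (\<Sum>i<n. \<Sum>l<n. cmod (Q $$ (i,l))) * (\<Sum>k<n. (cmod (x k))^2)"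
    unfolding N_def .
qed

lemma pd_eventually:
  assumes pd: "pos_def_mat n P"
  shows "eventually (\<lambda>b::real. \<forall>x::nat\<Rightarrow>complex. (\<exists>i<n. x i \<noteq> 0) \<longrightarrow>
            0 < b * Re (qf n P x x) - Re (qf n Q x x)) at_top"
proof -
  obtain c where c: "c > 0" "\<And>x::nat\<Rightarrow>complex. c * (\<Sum>k<n. (cmod (x k))^2) \<le> Re (qf n P x x)"
    using pd_lower[OF pd] by blast
  obtain C where C: "\<And>x::nat\<Rightarrow>complex. Re (qf n Q x x) \<le> C * (\<Sum>k<n. (cmod (x k))^2)"
    using qf_upper by blast
  show ?thesis
    using eventually_ge_at_top[of "max 0 (C / c + 1)"]
  proof eventually_elim
    case (elim b)
    show ?case
    proof (intro allI impI)
      fix x :: "nat \<Rightarrow> complex" assume "\<exists>i<n. x i \<noteq> 0"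
      then obtain i where i: "i < n" "x i \<noteq> 0" by blast
      define N where "N = (\<Sum>k<n. (cmod (x k))^2)"
      have "(cmod (x i))^2 \<le> N" unfolding N_def using i by (intro member_le_sum) auto
      moreover have "0 < (cmod (x i))^2" using i by simp
      ultimately have N0: "0 < N" by linarith
      have b0: "0 \<le> b" and bc: "C / c + 1 \<le> b" using elim by auto
      have "C < b * c" using bc c(1) by (simp add: field_simps)
      then have "C * N < (b * c) * N" using N0 by simp
      also have "\<dots> \<le> b * Re (qf n P x x)" using mult_left_mono[OF c(2)[of x] b0] unfolding N_def
        by (simp add: mult.assoc)
      finally show "0 < b * Re (qf n P x x) - Re (qf n Q x x)" using C[of x] unfolding N_def by simp
    qed
  qed
qed

lemma hankel_carrier[simp]: "hankel q i t \<in> carrier_mat ((i+1)*q) ((i+1)*q)"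
  unfolding hankel_def by (rule mat_carrier)

lemma hankel_index:
  "r < (i+1)*q \<Longrightarrow> c < (i+1)*q \<Longrightarrow> hankel q i t $$ (r,c) = t (r div q + c div q) $$ (r mod q, c mod q)"
  unfolding hankel_def by simp

lemma blockcol_carrier[simp]: "blockcol q i f \<in> carrier_mat ((i+1)*q) q"
  unfolding blockcol_def by (rule mat_carrier)

lemma blockcol_index:
  "r < (i+1)*q \<Longrightarrow> c < q \<Longrightarrow> blockcol q i f $$ (r,c) = f (r div q) $$ (r mod q, c)"
  unfolding blockcol_def by simp

lemma div_bound: "(r::nat) < (i+1)*q \<Longrightarrow> r div q \<le> i"
  by (metis less_mult_imp_div_less less_Suc_eq_le mult.commute Suc_eq_plus1)

lemma mod_bound: "(r::nat) < (i+1)*q \<Longrightarrow> r mod q < q"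
  by (cases "q = 0") auto

lemma vvec_carrier[simp]: "vvec q i \<in> carrier_mat ((i+1)*q) q"
  unfolding vvec_def by (rule blockcol_carrier)

lemma u2_carrier[simp]: "u2 q a b s i \<in> carrier_mat ((i+1)*q) q"
  unfolding u2_def by (rule blockcol_carrier)

lemma u2t_carrier[simp]: "u2t q a s i \<in> carrier_mat ((i+1)*q) q"
  unfolding u2t_def by (rule blockcol_carrier)

lemma Rmat0: "Rmat q i 0 = 1\<^sub>m ((i+1)*q)"
proof -
  have "1\<^sub>m ((i+1)*q) - 0 \<cdot>\<^sub>m Tmat q i = 1\<^sub>m ((i+1)*q)"
    by (rule eq_matI) (auto simp: Tmat_def)
  then show ?thesis unfolding Rmat_def
    by (simp add: minv_unique[of _ "(i+1)*q"])
qed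

lemma smult_mult2:
  fixes A B :: "complex mat"
  assumes A: "A \<in> carrier_mat k m" and B: "B \<in> carrier_mat m k'"
  shows "(a \<cdot>\<^sub>m A) * (c \<cdot>\<^sub>m B) = (a * c) \<cdot>\<^sub>m (A * B)"
proof -
  have "(a \<cdot>\<^sub>m A) * (c \<cdot>\<^sub>m B) = a \<cdot>\<^sub>m (A * (c \<cdot>\<^sub>m B))"
    by (rule mult_smult_assoc_mat[OF A, of _ k']) (use B in simp)
  also have "\<dots> = a \<cdot>\<^sub>m (c \<cdot>\<^sub>m (A * B))" using mult_smult_distrib[OF A B] by simp
  also have "\<dots> = (a * c) \<cdot>\<^sub>m (A * B)" by (rule eq_matI) auto
  finally show ?thesis .
qed

lemma sandwich_smult:
  fixes A X B :: "complex mat"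
  assumes "A \<in> carrier_mat k m" "X \<in> carrier_mat m m" "B \<in> carrier_mat m k'"
  shows "(a \<cdot>\<^sub>m A) * (c \<cdot>\<^sub>m X) * (d \<cdot>\<^sub>m B) = (a * c * d) \<cdot>\<^sub>m (A * X * B)"
proof -
  have "(a \<cdot>\<^sub>m A) * (c \<cdot>\<^sub>m X) = (a * c) \<cdot>\<^sub>m (A * X)" by (rule smult_mult2[OF assms(1,2)])
  moreover have "A * X \<in> carrier_mat k m" using assms by simp
  ultimately show ?thesis using smult_mult2[OF _ assms(3)] by simp
qed

lemma cadj_smult_real: "cadj (complex_of_real r \<cdot>\<^sub>m A) = complex_of_real r \<cdot>\<^sub>m cadj A"
  unfolding cadj_def by (rule eq_matI) auto

lemma of_real_inverse_0: "((\<lambda>b. complex_of_real (inverse b)) \<longlongrightarrow> 0) at_top"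
proof -
  have "((\<lambda>b. complex_of_real (inverse b)) \<longlongrightarrow> complex_of_real 0) at_top"
    by (rule tendsto_of_real[OF tendsto_inverse_0_at_top[OF filterlim_ident]])
  then show ?thesis by simp
qed

lemma herm_entry: "hermitian_mat N P \<Longrightarrow> r < N \<Longrightarrow> c < N \<Longrightarrow> P $$ (r,c) = cnj (P $$ (c,r))"
  unfolding hermitian_mat_def by (metis cadj_index)

lemma vec_nonzero: "v \<in> carrier_vec N \<Longrightarrow> v \<noteq> 0\<^sub>v N \<Longrightarrow> \<exists>i<N. v $ i \<noteq> 0"
  by (metis carrier_vecD eq_vecI index_zero_vec(1) index_zero_vec(2))

lemma pd_ev:
  assumes pd: "pos_def_mat N P" and Qh: "hermitian_mat N Q"
    and MC: "\<And>b. M b \<in> carrier_mat N N"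
    and Me: "\<And>b r c. r < N \<Longrightarrow> c < N \<Longrightarrow> M b $$ (r,c) = complex_of_real b * P $$ (r,c) - Q $$ (r,c)"
  shows "eventually (\<lambda>b. pos_def_mat N (M b)) at_top"
  using pd_eventually[OF pd, of Q]
proof (rule eventually_mono)
  fix b assume H: "\<forall>x::nat\<Rightarrow>complex. (\<exists>i<N. x i \<noteq> 0) \<longrightarrow> 0 < b * Re (qf N P x x) - Re (qf N Q x x)"
  have Ph: "hermitian_mat N P" using pd unfolding pos_def_mat_def by auto
  have herm: "hermitian_mat N (M b)" unfolding hermitian_mat_def
  proof
    show "M b \<in> carrier_mat N N" by (rule MC)
    show "cadj (M b) = M b"
    proof (rule eq_matI)
      fix r c assume "r < dim_row (M b)" "c < dim_col (M b)"
      then have rc: "r < N" "c < N" using MC[of b] by auto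
      show "cadj (M b) $$ (r,c) = M b $$ (r,c)"
        using cadj_index[OF MC rc] Me[OF rc] Me[OF rc(2,1)] herm_entry[OF Ph rc] herm_entry[OF Qh rc]
        by simp
    qed (use MC[of b] in \<open>auto simp: cadj_def\<close>)
  qed
  show "pos_def_mat N (M b)" unfolding pos_def_mat_def
  proof (intro conjI herm ballI impI)
    fix v :: "complex vec" assume v: "v \<in> carrier_vec N" "v \<noteq> 0\<^sub>v N"
    obtain i where i: "i < N" "v $ i \<noteq> 0" using vec_nonzero[OF v] by blast
    have "(\<Sum>i<N. cnj (v $ i) * (M b *\<^sub>v v) $ i) = qf N (M b) (\<lambda>i. v $ i) (\<lambda>i. v $ i)"
      by (rule qf_vec[OF MC v(1)])
    also have "\<dots> = complex_of_real b * qf N P (\<lambda>i. v $ i) (\<lambda>i. v $ i) - qf N Q (\<lambda>i. v $ i) (\<lambda>i. v $ i)"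
      by (rule qf_lin) (rule Me)
    finally show "0 < Re (\<Sum>i<N. cnj (v $ i) * (M b *\<^sub>v v) $ i)"
      using H[rule_format, of "\<lambda>i. v $ i"] i by auto
  qed
qed

lemma pd_sub:
  assumes pd: "pos_def_mat N P" and le: "N' \<le> N" and PC: "P' \<in> carrier_mat N' N'"
    and e: "\<And>r c. r < N' \<Longrightarrow> c < N' \<Longrightarrow> P' $$ (r,c) = P $$ (r,c)"
  shows "pos_def_mat N' P'"
proof -
  have Ph: "hermitian_mat N P" using pd unfolding pos_def_mat_def by auto
  have herm: "hermitian_mat N' P'" unfolding hermitian_mat_def
  proof
    show "P' \<in> carrier_mat N' N'" by (rule PC)
    show "cadj P' = P'"
    proof (rule eq_matI)
      fix r c assume "r < dim_row P'" "c < dim_col P'"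
      then have rc: "r < N'" "c < N'" using PC by auto
      show "cadj P' $$ (r,c) = P' $$ (r,c)"
        using cadj_index[OF PC rc] e[OF rc] e[OF rc(2,1)] herm_entry[OF Ph, of r c] rc le by simp
    qed (use PC in \<open>auto simp: cadj_def\<close>)
  qed
  show ?thesis unfolding pos_def_mat_def
  proof (intro conjI herm ballI impI)
    fix v :: "complex vec" assume v: "v \<in> carrier_vec N'" "v \<noteq> 0\<^sub>v N'"
    obtain i where i: "i < N'" "v $ i \<noteq> 0" using vec_nonzero[OF v] by blast
    define x where "x k = (if k < N' then v $ k else 0)" for k
    have "0 < Re (qf N P x x)" using pd_pos[OF pd, of i x] i le unfolding x_def by auto
    also have "qf N P x x = (\<Sum>k<N'. \<Sum>l<N. cnj (x k) * P $$ (k,l) * x l)"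
      unfolding qf_def by (rule sum.mono_neutral_right) (use le in \<open>auto simp: x_def\<close>)
    also have "\<dots> = (\<Sum>k<N'. \<Sum>l<N'. cnj (x k) * P $$ (k,l) * x l)"
      by (intro sum.cong refl sum.mono_neutral_right) (use le in \<open>auto simp: x_def\<close>)
    also have "\<dots> = qf N' P' (\<lambda>i. v $ i) (\<lambda>i. v $ i)"
      unfolding qf_def by (intro sum.cong refl) (simp add: x_def e)
    also have "\<dots> = (\<Sum>i<N'. cnj (v $ i) * (P' *\<^sub>v v) $ i)"
      by (rule qf_vec[OF PC v(1), symmetric])
    finally show "0 < Re (\<Sum>i<N'. cnj (v $ i) * (P' *\<^sub>v v) $ i)" .
  qed
qed

lemma hankel_herm:
  assumes "\<And>m. m \<le> 2*i \<Longrightarrow> hermitian_mat q (t m)"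
  shows "hermitian_mat ((i+1)*q) (hankel q i t)"
  unfolding hermitian_mat_def
proof
  show C: "hankel q i t \<in> carrier_mat ((i+1)*q) ((i+1)*q)" by (rule hankel_carrier)
  show "cadj (hankel q i t) = hankel q i t"
  proof (rule eq_matI)
    fix r c assume "r < dim_row (hankel q i t)" "c < dim_col (hankel q i t)"
    then have rc: "r < (i+1)*q" "c < (i+1)*q" by (auto simp: hankel_def)
    have m: "c div q + r div q \<le> 2*i" using div_bound[OF rc(1)] div_bound[OF rc(2)] by simp
    show "cadj (hankel q i t) $$ (r,c) = hankel q i t $$ (r,c)"
      using cadj_index[OF C rc] hankel_index[OF rc] hankel_index[OF rc(2,1)]
        herm_entry[OF assms[OF m] mod_bound[OF rc(1)] mod_bound[OF rc(2)]]
      by (simp add: add.commute)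
  qed (auto simp: cadj_def hankel_def)
qed

lemma sandwich_mid:
  fixes A X B :: "complex mat"
  assumes "A \<in> carrier_mat k m" "X \<in> carrier_mat m m" "B \<in> carrier_mat m k'"
  shows "A * (c \<cdot>\<^sub>m X) * B = c \<cdot>\<^sub>m (A * X * B)"
proof -
  have o: "(1::complex) \<cdot>\<^sub>m M = M" for M :: "complex mat" by (rule eq_matI) auto
  show ?thesis using sandwich_smult[OF assms, of 1 c 1] by (simp add: o)
qed

lemma smult_cancel: "(c::complex) \<noteq> 0 \<Longrightarrow> c \<cdot>\<^sub>m ((1 / c) \<cdot>\<^sub>m A) = A"
  by (rule eq_matI) auto

lemma hk: "(r::nat) < (i+1)*q \<Longrightarrow> c < (i+1)*q \<Longrightarrow> i \<le> j \<Longrightarrow>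
    r div q + c div q + 2 \<le> 2*j+2 \<and> r mod q < q \<and> c mod q < q"
  using div_bound[of r i q] div_bound[of c i q] mod_bound[of r i q] mod_bound[of c i q] by auto

context
  fixes q j :: nat and s :: "nat \<Rightarrow> complex mat"
  assumes herm: "\<And>n. n \<le> 2*j+2 \<Longrightarrow> hermitian_mat q (s n)"
begin

lemma sC: "n \<le> 2*j+2 \<Longrightarrow> s n \<in> carrier_mat q q"
  using herm unfolding hermitian_mat_def by auto

lemma sdim: "n \<le> 2*j+2 \<Longrightarrow> dim_row (s n) = q \<and> dim_col (s n) = q"
  using sC by auto

lemma M_lim:
  assumes i: "i \<le> j" and pd: "pos_def_mat ((i+1)*q) (H1 q s i)"
  shows "mt at_top q q (\<lambda>b. complex_of_real b \<cdot>\<^sub>m mu q 0 b s i) (Mcum q 0 s i)"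
proof -
  let ?N = "(i+1)*q"
  define G where "G b = hankel q i (\<lambda>m. s m - complex_of_real (inverse b) \<cdot>\<^sub>m s (m+1))" for b
  have GC: "G b \<in> carrier_mat ?N ?N" for b unfolding G_def by (rule hankel_carrier)
  have HC: "H1 q s i \<in> carrier_mat ?N ?N" unfolding H1_def by (rule hankel_carrier)
  have Gt: "mt at_top ?N ?N G (H1 q s i)"
    unfolding mt_def
  proof (intro allI impI)
    fix r c assume rc: "r < ?N" "c < ?N"
    note h = hk[OF rc i]
    have d: "dim_row (s (r div q + c div q)) = q" "dim_col (s (r div q + c div q)) = q"
       "dim_row (s (r div q + c div q + 1)) = q" "dim_col (s (r div q + c div q + 1)) = q"
      using sdim h by auto
    have e: "G b $$ (r,c) = s (r div q + c div q) $$ (r mod q, c mod q)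
        - complex_of_real (inverse b) * s (r div q + c div q + 1) $$ (r mod q, c mod q)" for b
      unfolding G_def hankel_index[OF rc] using h d by simp
    show "((\<lambda>b. G b $$ (r,c)) \<longlongrightarrow> H1 q s i $$ (r,c)) at_top"
      unfolding e H1_def hankel_index[OF rc]
      using tendsto_diff[OF tendsto_const tendsto_mult[OF of_real_inverse_0 tendsto_const]] by simp
  qed
  have K: "K1 q b s i = complex_of_real b \<cdot>\<^sub>m G b" if b: "0 < b" for b
  proof (rule eq_matI)
    fix r c assume "r < dim_row (complex_of_real b \<cdot>\<^sub>m G b)" "c < dim_col (complex_of_real b \<cdot>\<^sub>m G b)"
    then have rc: "r < ?N" "c < ?N" using GC[of b] by auto
    note h = hk[OF rc i]
    have d: "dim_row (s (r div q + c div q)) = q" "dim_col (s (r div q + c div q)) = q"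
       "dim_row (s (r div q + c div q + 1)) = q" "dim_col (s (r div q + c div q + 1)) = q"
      using sdim h by auto
    show "K1 q b s i $$ (r,c) = (complex_of_real b \<cdot>\<^sub>m G b) $$ (r,c)"
    proof -
      have hd: "dim_row (hankel q i t) = ?N" "dim_col (hankel q i t) = ?N" for t
        by (simp_all add: hankel_def)
      show ?thesis unfolding K1_def G_def
        using rc h d b by (simp add: hd hankel_index algebra_simps)
    qed
  qed (auto simp: K1_def G_def hankel_def)
  have dH: "det (H1 q s i) \<noteq> 0" by (rule pd_det[OF pd])
  have dG: "eventually (\<lambda>b. det (G b) \<noteq> 0) at_top"
    by (rule tendsto_imp_eventually_ne[OF det_tendsto[OF GC HC Gt] dH])
  let ?V = "vvec q i"
  have VC: "?V \<in> carrier_mat ?N q" by (rule vvec_carrier)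
  have one: "1\<^sub>m ?N * ?V = ?V" by (rule left_mult_one_mat[OF VC])
  have mu: "mu q 0 b s i = cadj ?V * minv (K1 q b s i) * ?V" for b
    unfolding mu_def Let_def using Rmat0[of q i] one by simp
  have Mc: "Mcum q 0 s i = cadj ?V * minv (H1 q s i) * ?V"
    unfolding Mcum_def Let_def using Rmat0[of q i] one by simp
  have ev: "eventually (\<lambda>b. complex_of_real b \<cdot>\<^sub>m mu q 0 b s i = cadj ?V * minv (G b) * ?V) at_top"
    using dG eventually_gt_at_top[of "0::real"]
  proof eventually_elim
    case (elim b)
    have b0: "complex_of_real b \<noteq> 0" using elim by simp
    have "complex_of_real b \<cdot>\<^sub>m mu q 0 b s i
        = complex_of_real b \<cdot>\<^sub>m (cadj ?V * ((1 / complex_of_real b) \<cdot>\<^sub>m minv (G b)) * ?V)"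
      unfolding mu K[OF elim(2)] minv_smult[OF GC elim(1) b0] ..
    also have "\<dots> = complex_of_real b \<cdot>\<^sub>m ((1 / complex_of_real b) \<cdot>\<^sub>m (cadj ?V * minv (G b) * ?V))"
      using sandwich_mid[OF cadj_carrier[OF VC] minv_carrier[OF GC] VC] by simp
    also have "\<dots> = cadj ?V * minv (G b) * ?V" by (rule smult_cancel[OF b0])
    finally show ?case .
  qed
  have "mt at_top q q (\<lambda>b. cadj ?V * minv (G b) * ?V) (cadj ?V * minv (H1 q s i) * ?V)"
    by (intro mt_mult[where m = ?N] mt_const mt_minv[OF GC HC Gt dH])
       (use VC GC HC cadj_carrier[OF VC] minv_carrier[OF GC] minv_carrier[OF HC]
          mult_carrier_mat[OF cadj_carrier[OF VC] minv_carrier[OF GC]]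
          mult_carrier_mat[OF cadj_carrier[OF VC] minv_carrier[OF HC]] in auto)
  then show ?thesis unfolding Mc by (rule mt_cong[OF ev])
qed

lemma L_lim:
  assumes i: "i \<le> j" and pd: "pos_def_mat ((i+1)*q) (K2 q 0 s i)"
  shows "mt at_top q q (\<lambda>b. complex_of_real (inverse b) \<cdot>\<^sub>m lam q 0 b s i) (Lcum q 0 s i)"
proof -
  let ?N = "(i+1)*q"
  have sd1: "dim_row (s n) = q" and sd2: "dim_col (s n) = q" if "n \<le> 2*j+2" for n
    using sdim[OF that] by auto
  have hd: "dim_row (hankel q i t) = ?N" "dim_col (hankel q i t) = ?N" for t
    by (simp_all add: hankel_def)
  have bd: "dim_row (blockcol q i t) = ?N" "dim_col (blockcol q i t) = q" for t
    by (simp_all add: blockcol_def)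
  define G where "G b = hankel q i (\<lambda>m. s (m+1) - complex_of_real (inverse b) \<cdot>\<^sub>m s (m+2))" for b
  define W where "W b = blockcol q i (\<lambda>k. complex_of_real (inverse b) \<cdot>\<^sub>m s (k+1) - s k)" for b
  let ?U = "u2t q 0 s i"
  have GC: "G b \<in> carrier_mat ?N ?N" for b unfolding G_def by (rule hankel_carrier)
  have WC: "W b \<in> carrier_mat ?N q" for b unfolding W_def by (rule blockcol_carrier)
  have UC: "?U \<in> carrier_mat ?N q" by (rule u2t_carrier)
  have KC: "K2 q 0 s i \<in> carrier_mat ?N ?N" unfolding K2_def by (rule hankel_carrier)
  have Gt: "mt at_top ?N ?N G (K2 q 0 s i)"
    unfolding mt_def
  proof (intro allI impI)
    fix r c assume rc: "r < ?N" "c < ?N"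
    note h = hk[OF rc i]
    have e: "G b $$ (r,c) = s (r div q + c div q + 1) $$ (r mod q, c mod q)
        - complex_of_real (inverse b) * s (r div q + c div q + 2) $$ (r mod q, c mod q)" for b
      unfolding G_def hankel_index[OF rc] using h by (simp add: sd1 sd2)
    have e2: "K2 q 0 s i $$ (r,c) = s (r div q + c div q + 1) $$ (r mod q, c mod q)"
      unfolding K2_def hankel_index[OF rc] using h by (simp add: sd1 sd2)
    show "((\<lambda>b. G b $$ (r,c)) \<longlongrightarrow> K2 q 0 s i $$ (r,c)) at_top"
      unfolding e e2
      using tendsto_diff[OF tendsto_const tendsto_mult[OF of_real_inverse_0 tendsto_const]] by simp
  qed
  have Wt: "mt at_top ?N q W ?U"
    unfolding mt_def
  proof (intro allI impI)
    fix r c assume rc: "r < ?N" "c < q"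
    have k: "r div q \<le> i" "r mod q < q" using div_bound[OF rc(1)] mod_bound[OF rc(1)] by auto
    have e: "W b $$ (r,c) = complex_of_real (inverse b) * s (r div q + 1) $$ (r mod q, c)
        - s (r div q) $$ (r mod q, c)" for b
      unfolding W_def blockcol_index[OF rc] using k i rc by (simp add: sd1 sd2)
    have e2: "?U $$ (r,c) = - s (r div q) $$ (r mod q, c)"
      unfolding u2t_def blockcol_index[OF rc] using k i rc by (cases "r div q") (simp_all add: sd1 sd2)
    show "((\<lambda>b. W b $$ (r,c)) \<longlongrightarrow> ?U $$ (r,c)) at_top"
      unfolding e e2
      using tendsto_diff[OF tendsto_mult[OF of_real_inverse_0 tendsto_const] tendsto_const] by simp
  qed
  have H: "H2 q 0 b s i = complex_of_real b \<cdot>\<^sub>m G b" if b: "0 < b" for b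
  proof (rule eq_matI)
    fix r c assume "r < dim_row (complex_of_real b \<cdot>\<^sub>m G b)" "c < dim_col (complex_of_real b \<cdot>\<^sub>m G b)"
    then have rc: "r < ?N" "c < ?N" using GC[of b] by auto
    note h = hk[OF rc i]
    show "H2 q 0 b s i $$ (r,c) = (complex_of_real b \<cdot>\<^sub>m G b) $$ (r,c)"
      unfolding H2_def G_def shat_def
      using rc h b by (simp add: hd hankel_index sd1 sd2 algebra_simps)
  qed (auto simp: H2_def G_def hankel_def)
  have u: "u2 q 0 b s i = complex_of_real b \<cdot>\<^sub>m W b" if b: "0 < b" for b
  proof (rule eq_matI)
    fix r c assume "r < dim_row (complex_of_real b \<cdot>\<^sub>m W b)" "c < dim_col (complex_of_real b \<cdot>\<^sub>m W b)"
    then have rc: "r < ?N" "c < q" using WC[of b] by auto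
    have k: "r div q \<le> i" "r mod q < q" using div_bound[OF rc(1)] mod_bound[OF rc(1)] by auto
    show "u2 q 0 b s i $$ (r,c) = (complex_of_real b \<cdot>\<^sub>m W b) $$ (r,c)"
      unfolding u2_def W_def
      using rc k b i by (cases "r div q") (simp_all add: bd blockcol_index sd1 sd2 u20_def shat_def algebra_simps)
  qed (auto simp: u2_def W_def blockcol_def)
  have dK: "det (K2 q 0 s i) \<noteq> 0" by (rule pd_det[OF pd])
  have dG: "eventually (\<lambda>b. det (G b) \<noteq> 0) at_top"
    by (rule tendsto_imp_eventually_ne[OF det_tendsto[OF GC KC Gt] dK])
  have VC: "vvec q i * s 0 \<in> carrier_mat ?N q"
    using vvec_carrier sC[of 0] by (rule mult_carrier_mat) simp
  have w: "Rmat q i (complex_of_real 0) * (u2 q 0 b s i + complex_of_real 0 \<cdot>\<^sub>m (vvec q i * s 0))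
      = u2 q 0 b s i" for b
  proof -
    have "u2 q 0 b s i + complex_of_real 0 \<cdot>\<^sub>m (vvec q i * s 0) = u2 q 0 b s i"
    proof (rule eq_matI)
      have vd: "dim_row (vvec q i * s 0) = ?N" "dim_col (vvec q i * s 0) = q" using VC by auto
      have ud: "dim_row (u2 q 0 b s i) = ?N" "dim_col (u2 q 0 b s i) = q" by (simp_all add: u2_def bd)
      fix r c assume "r < dim_row (u2 q 0 b s i)" "c < dim_col (u2 q 0 b s i)"
      then show "(u2 q 0 b s i + complex_of_real 0 \<cdot>\<^sub>m (vvec q i * s 0)) $$ (r,c) = u2 q 0 b s i $$ (r,c)"
        using vd ud by simp
    qed (use VC in \<open>auto simp: u2_def bd\<close>)
    then show ?thesis using Rmat0[of q i] left_mult_one_mat[OF u2_carrier] by simp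
  qed
  have lam: "lam q 0 b s i = cadj (u2 q 0 b s i) * minv (H2 q 0 b s i) * u2 q 0 b s i" for b
    unfolding lam_def Let_def w ..
  have Lc: "Lcum q 0 s i = cadj ?U * minv (K2 q 0 s i) * ?U"
    unfolding Lcum_def Let_def using Rmat0[of q i] left_mult_one_mat[OF UC] by simp
  have ev: "eventually (\<lambda>b. complex_of_real (inverse b) \<cdot>\<^sub>m lam q 0 b s i
              = cadj (W b) * minv (G b) * W b) at_top"
    using dG eventually_gt_at_top[of "0::real"]
  proof eventually_elim
    case (elim b)
    have b0: "complex_of_real b \<noteq> 0" using elim by simp
    have "complex_of_real (inverse b) \<cdot>\<^sub>m lam q 0 b s i
        = complex_of_real (inverse b) \<cdot>\<^sub>m ((complex_of_real b \<cdot>\<^sub>m cadj (W b))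
             * ((1 / complex_of_real b) \<cdot>\<^sub>m minv (G b)) * (complex_of_real b \<cdot>\<^sub>m W b))"
      unfolding lam u[OF elim(2)] H[OF elim(2)] minv_smult[OF GC elim(1) b0] cadj_smult_real ..
    also have "\<dots> = complex_of_real (inverse b) \<cdot>\<^sub>m
        ((complex_of_real b * (1 / complex_of_real b) * complex_of_real b) \<cdot>\<^sub>m (cadj (W b) * minv (G b) * W b))"
      using sandwich_smult[OF cadj_carrier[OF WC] minv_carrier[OF GC] WC] by simp
    also have "\<dots> = cadj (W b) * minv (G b) * W b"
      using b0 by (intro eq_matI) (auto simp: field_simps)
    finally show ?case .
  qed
  have "mt at_top q q (\<lambda>b. cadj (W b) * minv (G b) * W b) (cadj ?U * minv (K2 q 0 s i) * ?U)"
    by (intro mt_mult[where m = ?N] mt_cadj[OF WC UC Wt] mt_minv[OF GC KC Gt dK] Wt)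
       (use WC UC GC KC cadj_carrier[OF UC] minv_carrier[OF GC] minv_carrier[OF KC]
          mult_carrier_mat[OF cadj_carrier[OF WC] minv_carrier[OF GC]]
          mult_carrier_mat[OF cadj_carrier[OF UC] minv_carrier[OF KC]] in auto)
  then show ?thesis unfolding Lc by (rule mt_cong[OF ev])
qed

lemma lam_form: "lam q 0 b s i = cadj (u2 q 0 b s i) * minv (H2 q 0 b s i) * u2 q 0 b s i"
proof -
  let ?N = "(i+1)*q"
  have bd: "dim_row (blockcol q i t) = ?N" "dim_col (blockcol q i t) = q" for t
    by (simp_all add: blockcol_def)
  have VC: "vvec q i * s 0 \<in> carrier_mat ?N q"
    using vvec_carrier sC[of 0] by (rule mult_carrier_mat) simp
  have "u2 q 0 b s i + complex_of_real 0 \<cdot>\<^sub>m (vvec q i * s 0) = u2 q 0 b s i"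
  proof (rule eq_matI)
    have vd: "dim_row (vvec q i * s 0) = ?N" "dim_col (vvec q i * s 0) = q" using VC by auto
    have ud: "dim_row (u2 q 0 b s i) = ?N" "dim_col (u2 q 0 b s i) = q" by (simp_all add: u2_def bd)
    fix r c assume "r < dim_row (u2 q 0 b s i)" "c < dim_col (u2 q 0 b s i)"
    then show "(u2 q 0 b s i + complex_of_real 0 \<cdot>\<^sub>m (vvec q i * s 0)) $$ (r,c) = u2 q 0 b s i $$ (r,c)"
      using vd ud by simp
  qed (use VC in \<open>auto simp: u2_def bd\<close>)
  then show ?thesis unfolding lam_def Let_def
    using Rmat0[of q i] left_mult_one_mat[OF u2_carrier] by simp
qed

lemma lam_carrier: "lam q 0 b s i \<in> carrier_mat q q"
  unfolding lam_form H2_def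
  by (rule mult_carrier_mat[OF mult_carrier_mat[OF cadj_carrier[OF u2_carrier]
        minv_carrier[OF hankel_carrier]] u2_carrier])

end

lemma mu_form: "mu q 0 b s i = cadj (vvec q i) * minv (K1 q b s i) * vvec q i"
  unfolding mu_def Let_def using Rmat0[of q i] left_mult_one_mat[OF vvec_carrier] by simp

lemma mu_carrier: "mu q 0 b s i \<in> carrier_mat q q"
  unfolding mu_form K1_def
  by (rule mult_carrier_mat[OF mult_carrier_mat[OF cadj_carrier[OF vvec_carrier]
        minv_carrier[OF hankel_carrier]] vvec_carrier])

lemma Mcum_form: "Mcum q 0 s i = cadj (vvec q i) * minv (H1 q s i) * vvec q i"
  unfolding Mcum_def Let_def using Rmat0[of q i] left_mult_one_mat[OF vvec_carrier] by simp

lemma Mcum_carrier: "Mcum q 0 s i \<in> carrier_mat q q"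
  unfolding Mcum_form H1_def
  by (rule mult_carrier_mat[OF mult_carrier_mat[OF cadj_carrier[OF vvec_carrier]
        minv_carrier[OF hankel_carrier]] vvec_carrier])

lemma Lcum_form: "Lcum q 0 s i = cadj (u2t q 0 s i) * minv (K2 q 0 s i) * u2t q 0 s i"
  unfolding Lcum_def Let_def using Rmat0[of q i] left_mult_one_mat[OF u2t_carrier] by simp

lemma Lcum_carrier: "Lcum q 0 s i \<in> carrier_mat q q"
  unfolding Lcum_form K2_def
  by (rule mult_carrier_mat[OF mult_carrier_mat[OF cadj_carrier[OF u2t_carrier]
        minv_carrier[OF hankel_carrier]] u2t_carrier])

lemma smult_diff_mat:
  "A \<in> carrier_mat n m \<Longrightarrow> B \<in> carrier_mat n m \<Longrightarrow> (c::complex) \<cdot>\<^sub>m (A - B) = c \<cdot>\<^sub>m A - c \<cdot>\<^sub>m B"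
  by (rule eq_matI) (auto simp: algebra_simps)

theorem mainTheorem12:
  fixes q j :: nat and s :: "nat \<Rightarrow> complex mat"
  assumes "0 < q"
    and herm: "\<And>n. n \<le> 2*j+2 \<Longrightarrow> hermitian_mat q (s n)"
    and pd1: "pos_def_mat ((j+1)*q) (hankel q j s)"
    and pd2: "pos_def_mat ((j+1)*q) (hankel q j (\<lambda>n. s (n+1)))"
  shows "eventually (\<lambda>b. 0 < b \<and> pos_def_mat ((j+1)*q) (K1 q b s j)
                         \<and> pos_def_mat ((j+1)*q) (H2 q 0 b s j)) at_top
       \<and> mat_tendsto_at_top q (\<lambda>b. complex_of_real b \<cdot>\<^sub>m m_par q 0 b s j) (M_par q 0 s j)
       \<and> mat_tendsto_at_top q (\<lambda>b. complex_of_real (inverse b) \<cdot>\<^sub>m l_par q 0 b s j) (L_par q 0 s j)"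
proof -
  let ?N = "(j+1)*q"
  have sd1: "dim_row (s n) = q" and sd2: "dim_col (s n) = q" if "n \<le> 2*j+2" for n
    using herm[OF that] unfolding hermitian_mat_def by auto
  have Qh1: "hermitian_mat ?N (hankel q j (\<lambda>n. s (n+1)))" using pd2 unfolding pos_def_mat_def by auto
  have Qh2: "hermitian_mat ?N (hankel q j (\<lambda>n. s (n+2)))" by (rule hankel_herm) (use herm in auto)
  have evK: "eventually (\<lambda>b. pos_def_mat ?N (K1 q b s j)) at_top"
  proof (rule pd_ev[OF pd1 Qh1])
    show "K1 q b s j \<in> carrier_mat ?N ?N" for b unfolding K1_def by (rule hankel_carrier)
    fix b :: real and r c assume rc: "r < ?N" "c < ?N"
    note h = hk[OF rc order.refl]
    show "K1 q b s j $$ (r,c) = complex_of_real b * hankel q j s $$ (r,c) - hankel q j (\<lambda>n. s (n+1)) $$ (r,c)"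
      unfolding K1_def hankel_index[OF rc] using h by (simp add: sd1 sd2)
  qed
  have evH: "eventually (\<lambda>b. pos_def_mat ?N (H2 q 0 b s j)) at_top"
  proof (rule pd_ev[OF pd2 Qh2])
    show "H2 q 0 b s j \<in> carrier_mat ?N ?N" for b unfolding H2_def by (rule hankel_carrier)
    fix b :: real and r c assume rc: "r < ?N" "c < ?N"
    note h = hk[OF rc order.refl]
    show "H2 q 0 b s j $$ (r,c) = complex_of_real b * hankel q j (\<lambda>n. s (n+1)) $$ (r,c)
            - hankel q j (\<lambda>n. s (n+2)) $$ (r,c)"
      unfolding H2_def shat_def hankel_index[OF rc] using h by (simp add: sd1 sd2)
  qed
  have part1: "eventually (\<lambda>b. 0 < b \<and> pos_def_mat ?N (K1 q b s j) \<and> pos_def_mat ?N (H2 q 0 b s j)) at_top"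
    using evK evH eventually_gt_at_top[of "0::real"] by eventually_elim auto
  have pdH1: "pos_def_mat ((i+1)*q) (H1 q s i)" if i: "i \<le> j" for i
  proof (rule pd_sub[OF pd1])
    show "(i+1)*q \<le> ?N" using i by simp
    show "H1 q s i \<in> carrier_mat ((i+1)*q) ((i+1)*q)" unfolding H1_def by (rule hankel_carrier)
    fix r c assume rc: "r < (i+1)*q" "c < (i+1)*q"
    have rc': "r < ?N" "c < ?N" using rc i by (meson less_le_trans mult_le_mono1 add_le_mono1)+
    show "H1 q s i $$ (r,c) = hankel q j s $$ (r,c)"
      unfolding H1_def hankel_index[OF rc] hankel_index[OF rc'] ..
  qed
  have pdK2: "pos_def_mat ((i+1)*q) (K2 q 0 s i)" if i: "i \<le> j" for i
  proof (rule pd_sub[OF pd2])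
    show "(i+1)*q \<le> ?N" using i by simp
    show "K2 q 0 s i \<in> carrier_mat ((i+1)*q) ((i+1)*q)" unfolding K2_def by (rule hankel_carrier)
    fix r c assume rc: "r < (i+1)*q" "c < (i+1)*q"
    have rc': "r < ?N" "c < ?N" using rc i by (meson less_le_trans mult_le_mono1 add_le_mono1)+
    note h = hk[OF rc i]
    show "K2 q 0 s i $$ (r,c) = hankel q j (\<lambda>n. s (n+1)) $$ (r,c)"
      unfolding K2_def hankel_index[OF rc] hankel_index[OF rc'] using h by (simp add: sd1 sd2)
  qed
  have Ml: "mt at_top q q (\<lambda>b. complex_of_real b \<cdot>\<^sub>m mu q 0 b s i) (Mcum q 0 s i)" if "i \<le> j" for i
    by (rule M_lim[OF herm that pdH1[OF that]])
  have Ll: "mt at_top q q (\<lambda>b. complex_of_real (inverse b) \<cdot>\<^sub>m lam q 0 b s i) (Lcum q 0 s i)" if "i \<le> j" for i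
    by (rule L_lim[OF herm that pdK2[OF that]])
  have part2: "mt at_top q q (\<lambda>b. complex_of_real b \<cdot>\<^sub>m m_par q 0 b s j) (M_par q 0 s j)"
  proof (cases "j = 0")
    case True
    have s0: "s 0 \<in> carrier_mat q q" using herm[of 0] unfolding hermitian_mat_def by auto
    have V: "vvec q 0 = 1\<^sub>m q"
      by (rule eq_matI) (auto simp: vvec_def blockcol_def)
    have H: "H1 q s 0 = s 0"
      by (rule eq_matI) (use s0 in \<open>auto simp: H1_def hankel_def\<close>)
    have C: "cadj (1\<^sub>m q) = 1\<^sub>m q" by (rule eq_matI) (auto simp: cadj_def)
    have "Mcum q 0 s 0 = minv (s 0)"
      unfolding Mcum_form V H C using minv_carrier[OF s0] by simp
    then show ?thesis using Ml[of 0] True unfolding m_par_def M_par_def by simp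
  next
    case False
    have e: "complex_of_real b \<cdot>\<^sub>m m_par q 0 b s j
        = complex_of_real b \<cdot>\<^sub>m mu q 0 b s j - complex_of_real b \<cdot>\<^sub>m mu q 0 b s (j-1)" for b
      unfolding m_par_def using False smult_diff_mat[OF mu_carrier mu_carrier] by simp
    have "mt at_top q q (\<lambda>b. complex_of_real b \<cdot>\<^sub>m mu q 0 b s j - complex_of_real b \<cdot>\<^sub>m mu q 0 b s (j-1))
        (Mcum q 0 s j - Mcum q 0 s (j-1))"
      by (rule mt_minus[OF _ _ Mcum_carrier Mcum_carrier Ml Ml]) (use mu_carrier in auto)
    then show ?thesis unfolding e M_par_def using False by simp
  qed
  have part3: "mt at_top q q (\<lambda>b. complex_of_real (inverse b) \<cdot>\<^sub>m l_par q 0 b s j) (L_par q 0 s j)"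
  proof (cases "j = 0")
    case True
    have "L_par q 0 s 0 = Lcum q 0 s 0" unfolding L_par_def Lcum_form by simp
    then show ?thesis using Ll[of 0] True unfolding l_par_def by simp
  next
    case False
    have lc: "lam q 0 b s i \<in> carrier_mat q q" for b i by (rule lam_carrier[OF herm])
    have e: "complex_of_real (inverse b) \<cdot>\<^sub>m l_par q 0 b s j
        = complex_of_real (inverse b) \<cdot>\<^sub>m lam q 0 b s j - complex_of_real (inverse b) \<cdot>\<^sub>m lam q 0 b s (j-1)" for b
      unfolding l_par_def using False smult_diff_mat[OF lc lc] by simp
    have "mt at_top q q (\<lambda>b. complex_of_real (inverse b) \<cdot>\<^sub>m lam q 0 b s j
          - complex_of_real (inverse b) \<cdot>\<^sub>m lam q 0 b s (j-1))
        (Lcum q 0 s j - Lcum q 0 s (j-1))"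
      by (rule mt_minus[OF _ _ Lcum_carrier Lcum_carrier Ll Ll]) (use lc in auto)
    then show ?thesis unfolding e L_par_def using False by simp
  qed
  show ?thesis using part1 part2 part3 unfolding mat_tendsto_at_top_def mt_def by blast
qed

end
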